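(* The matroid $V_{10}/5$ (which is isomorphic to $V_{10}/7$) has the half-plane property; equivalently, the polynomial $\frac{\partial f_{10}}{\partial x_5}$ is stable.
   Context: $V_{10}$ is the matroid on $\{1,\dots,10\}$ whose bases are all $4$-element subsets of $\{1,\dots,10\}$ except $\{1,2,3,4\},\{1,2,5,6\},\{1,2,7,8\},\{1,2,9,10\},\{3,4,5,6\},\{5,6,7,8\},\{7,8,9,10\}$, and $f_{10}=\sum_{B}\prod_{i\in B}x_i$ (sum over bases $B$ of $V_{10}$) is its basis generating polynomial. For a matroid $M$ and element $e$, the contraction $M/e$ has as bases the sets $B\setminus\{e\}$ for bases $B$ of $M$ containing $e$; its basis generating polynomial is the partial derivative with respect to $x_e$ of that of $M$. A homogeneous real polynomial $f$ is stable if for all vectors $v$ with all entries positive and all real vectors $w$, $f(tv+w)\in\mathbb{R}[t]$ has only real roots; a matroid has the half-plane property if its basis generating polynomial is stable. *)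

theory Defs
  imports Complex_Main
begin

definition V10_bases :: "nat set set" where
  "V10_bases = {B. B \<subseteq> {1..10} \<and> card B = 4}
     - {{1,2,3,4}, {1,2,5,6}, {1,2,7,8}, {1,2,9,10}, {3,4,5,6}, {5,6,7,8}, {7,8,9,10}}"

definition contract_bases :: "nat set set \<Rightarrow> nat \<Rightarrow> nat set set" where
  "contract_bases Bs e = {B - {e} | B. B \<in> Bs \<and> e \<in> B}"

definition basis_gen_poly :: "nat set set \<Rightarrow> (nat \<Rightarrow> complex) \<Rightarrow> complex" where
  "basis_gen_poly Bs x = (\<Sum>B\<in>Bs. \<Prod>i\<in>B. x i)"

definition stable_on :: "nat set \<Rightarrow> ((nat \<Rightarrow> complex) \<Rightarrow> complex) \<Rightarrow> bool" where
  "stable_on E f \<longleftrightarrow>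
     (\<forall>v w :: nat \<Rightarrow> real. (\<forall>i\<in>E. v i > 0) \<longrightarrow>
        (\<forall>t :: complex. f (\<lambda>i. t * complex_of_real (v i) + complex_of_real (w i)) = 0
            \<longrightarrow> t \<in> \<real>))"

definition half_plane_property :: "nat set \<Rightarrow> nat set set \<Rightarrow> bool" where
  "half_plane_property E Bs \<longleftrightarrow> stable_on E (basis_gen_poly Bs)"

end

theory Submission
  imports Defs "HOL-Computational_Algebra.Fundamental_Theorem_Algebra"
begin




definition esym :: "(nat \<Rightarrow> complex) \<Rightarrow> nat set \<Rightarrow> nat \<Rightarrow> complex" where
  "esym x A k = (\<Sum>S\<in>{S. S \<subseteq> A \<and> card S = k}. \<Prod>i\<in>S. x i)"

lemma esym_empty_Suc: "esym x {} (Suc k) = 0"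
  unfolding esym_def by simp

lemma esym_0: "finite A \<Longrightarrow> esym x A 0 = 1"
proof -
  assume "finite A"
  then have "{S. S \<subseteq> A \<and> card S = 0} = {{}}" by (auto dest: finite_subset)
  then show ?thesis unfolding esym_def by simp
qed

lemma subsets_insert:
  assumes "finite A" "a \<notin> A"
  shows "{S. S \<subseteq> insert a A \<and> card S = Suc k} =
     {S. S \<subseteq> A \<and> card S = Suc k} \<union> insert a ` {S. S \<subseteq> A \<and> card S = k}"
proof (rule set_eqI, rule iffI)
  fix S assume "S \<in> {S. S \<subseteq> insert a A \<and> card S = Suc k}"
  then have S: "S \<subseteq> insert a A" "card S = Suc k" by auto
  have fS: "finite S" using S(1) assms(1) by (meson finite_insert finite_subset)
  show "S \<in> {S. S \<subseteq> A \<and> card S = Suc k} \<union> insert a ` {S. S \<subseteq> A \<and> card S = k}"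
  proof (cases "a \<in> S")
    case True
    have "S = insert a (S - {a})" using True by auto
    moreover have "S - {a} \<subseteq> A" using S(1) by auto
    moreover have "card (S - {a}) = k" using S(2) True fS by simp
    ultimately show ?thesis by blast
  next
    case False
    then show ?thesis using S by auto
  qed
next
  fix S assume "S \<in> {S. S \<subseteq> A \<and> card S = Suc k} \<union> insert a ` {S. S \<subseteq> A \<and> card S = k}"
  then show "S \<in> {S. S \<subseteq> insert a A \<and> card S = Suc k}"
  proof
    assume "S \<in> {S. S \<subseteq> A \<and> card S = Suc k}" then show ?thesis by auto
  next
    assume "S \<in> insert a ` {S. S \<subseteq> A \<and> card S = k}"
    then obtain T where T: "S = insert a T" "T \<subseteq> A" "card T = k" by auto
    have "finite T" using T(2) assms(1) finite_subset by auto
    moreover have "a \<notin> T" using T(2) assms(2) by auto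
    ultimately show ?thesis using T by auto
  qed
qed

lemma esym_insert:
  assumes "finite A" "a \<notin> A"
  shows "esym x (insert a A) (Suc k) = esym x A (Suc k) + x a * esym x A k"
proof -
  have fin: "finite {S. S \<subseteq> A \<and> card S = j}" for j using assms(1) by simp
  have disj: "{S. S \<subseteq> A \<and> card S = Suc k} \<inter> insert a ` {S. S \<subseteq> A \<and> card S = k} = {}"
    using assms(2) by auto
  have inj: "inj_on (insert a) {S. S \<subseteq> A \<and> card S = k}"
    using assms(2) by (intro inj_onI) (metis insert_absorb insert_ident mem_Collect_eq subsetD)
  have "esym x (insert a A) (Suc k) = (\<Sum>S\<in>{S. S \<subseteq> A \<and> card S = Suc k}. \<Prod>i\<in>S. x i)
      + (\<Sum>S\<in>insert a ` {S. S \<subseteq> A \<and> card S = k}. \<Prod>i\<in>S. x i)"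
    unfolding esym_def subsets_insert[OF assms] by (rule sum.union_disjoint) (use fin disj in auto)
  also have "(\<Sum>S\<in>insert a ` {S. S \<subseteq> A \<and> card S = k}. \<Prod>i\<in>S. x i)
      = (\<Sum>S\<in>{S. S \<subseteq> A \<and> card S = k}. \<Prod>i\<in>insert a S. x i)"
    by (simp add: sum.reindex[OF inj])
  also have "\<dots> = (\<Sum>S\<in>{S. S \<subseteq> A \<and> card S = k}. x a * (\<Prod>i\<in>S. x i))"
  proof (rule sum.cong)
    fix S assume "S \<in> {S. S \<subseteq> A \<and> card S = k}"
    then have "finite S" "a \<notin> S" using assms finite_subset by auto
    then show "(\<Prod>i\<in>insert a S. x i) = x a * (\<Prod>i\<in>S. x i)" by simp
  qed simp
  finally show ?thesis unfolding esym_def by (simp add: sum_distrib_left)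
qed

lemma esym_ins3: "finite A \<Longrightarrow> a \<notin> A \<Longrightarrow> esym x (insert a A) 3 = esym x A 3 + x a * esym x A 2"
  using esym_insert[of A a x 2] by (simp add: numeral_3_eq_3 numeral_2_eq_2)
lemma esym_ins2: "finite A \<Longrightarrow> a \<notin> A \<Longrightarrow> esym x (insert a A) 2 = esym x A 2 + x a * esym x A 1"
  using esym_insert[of A a x 1] by (simp add: numeral_2_eq_2)
lemma esym_ins1: "finite A \<Longrightarrow> a \<notin> A \<Longrightarrow> esym x (insert a A) 1 = esym x A 1 + x a * esym x A 0"
  using esym_insert[of A a x 0] by simp
lemma esym_e1: "esym x {} 1 = 0" using esym_empty_Suc[of x 0] by simp
lemma esym_e1': "esym x {} (Suc 0) = 0" using esym_empty_Suc[of x 0] by simp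
lemma esym_ins1': "finite A \<Longrightarrow> a \<notin> A \<Longrightarrow> esym x (insert a A) (Suc 0) = esym x A (Suc 0) + x a * esym x A 0"
  using esym_insert[of A a x 0] by simp
lemma esym_e2: "esym x {} 2 = 0" using esym_empty_Suc[of x 1] by (simp add: numeral_2_eq_2)
lemma esym_e3: "esym x {} 3 = 0" using esym_empty_Suc[of x 2] by (simp add: numeral_3_eq_3)

lemma E_eq: "{1..10::nat} - {5} = {1,2,3,4,6,7,8,9,10}"
  by (auto; presburger)

lemma ins5:
  assumes n5: "(5::nat) \<notin> S"
  shows "insert 5 S \<in> {{1,2,3,4}, {1,2,5,6}, {1,2,7,8}, {1,2,9,10}, {3,4,5,6}, {5,6,7,8}, {7,8,9,10}}
     \<longleftrightarrow> S \<in> {{1,2,6},{3,4,6},{6,7,8}}"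
proof
  assume h: "insert 5 S \<in> {{1,2,3,4}, {1,2,5,6}, {1,2,7,8}, {1,2,9,10}, {3,4,5,6}, {5,6,7,8}, {7,8,9,10}}"
  have e: "S = insert 5 S - {5}" using n5 by auto
  have m: "(5::nat) \<in> insert 5 S" by simp
  from h have "insert 5 S = {1,2,3,4} \<or> insert 5 S = {1,2,5,6} \<or> insert 5 S = {1,2,7,8} \<or>
     insert 5 S = {1,2,9,10} \<or> insert 5 S = {3,4,5,6} \<or> insert 5 S = {5,6,7,8} \<or> insert 5 S = {7,8,9,10}"
    by (simp only: insert_iff empty_iff simp_thms)
  then show "S \<in> {{1,2,6},{3,4,6},{6,7,8}}"
  proof (elim disjE)
    assume q: "insert 5 S = {1,2,3,4}" show ?thesis using m unfolding q by simp
  next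
    assume q: "insert 5 S = {1,2,5,6}"
    have "S = {1,2,5,6} - {5}" using e unfolding q .
    moreover have "{1,2,5,6} - {5} = {1,2,6::nat}" by auto
    ultimately show ?thesis by simp
  next
    assume q: "insert 5 S = {1,2,7,8}" show ?thesis using m unfolding q by simp
  next
    assume q: "insert 5 S = {1,2,9,10}" show ?thesis using m unfolding q by simp
  next
    assume q: "insert 5 S = {3,4,5,6}"
    have "S = {3,4,5,6} - {5}" using e unfolding q .
    moreover have "{3,4,5,6} - {5} = {3,4,6::nat}" by auto
    ultimately show ?thesis by simp
  next
    assume q: "insert 5 S = {5,6,7,8}"
    have "S = {5,6,7,8} - {5}" using e unfolding q .
    moreover have "{5,6,7,8} - {5} = {6,7,8::nat}" by auto
    ultimately show ?thesis by simp
  next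
    assume q: "insert 5 S = {7,8,9,10}" show ?thesis using m unfolding q by simp
  qed
next
  assume "S \<in> {{1,2,6},{3,4,6},{6,7,8}}"
  then have "S = {1,2,6} \<or> S = {3,4,6} \<or> S = {6,7,8}" by (simp only: insert_iff empty_iff simp_thms)
  moreover have "insert 5 {1,2,6} = {1,2,5,6::nat}" "insert 5 {3,4,6} = {3,4,5,6::nat}"
      "insert 5 {6,7,8} = {5,6,7,8::nat}" by auto
  ultimately show "insert 5 S \<in> {{1,2,3,4}, {1,2,5,6}, {1,2,7,8}, {1,2,9,10}, {3,4,5,6}, {5,6,7,8}, {7,8,9,10}}"
    by (elim disjE) simp_all
qed

lemma contract_eq:
  "contract_bases V10_bases 5 = {S. S \<subseteq> {1..10} - {5} \<and> card S = 3} - {{1,2,6},{3,4,6},{6,7,8}}"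
proof (rule set_eqI, rule iffI)
  fix S :: "nat set" assume "S \<in> contract_bases V10_bases 5"
  then have "\<exists>B. S = B - {5} \<and> B \<in> V10_bases \<and> 5 \<in> B"
    unfolding contract_bases_def by (simp only: mem_Collect_eq)
  then obtain B where B1: "S = B - {5}" "B \<in> V10_bases" "5 \<in> B" by blast
  have BB: "B \<in> {B. B \<subseteq> {1..10} \<and> card B = 4} - {{1,2,3,4}, {1,2,5,6}, {1,2,7,8}, {1,2,9,10}, {3,4,5,6}, {5,6,7,8}, {7,8,9,10}}"
    using B1(2) unfolding V10_bases_def .
  then have Bm: "B \<in> {B. B \<subseteq> {1..10} \<and> card B = 4}" by (rule DiffD1)
  have B3: "B \<notin> {{1,2,3,4}, {1,2,5,6}, {1,2,7,8}, {1,2,9,10}, {3,4,5,6}, {5,6,7,8}, {7,8,9,10}}" using BB by (elim DiffE) assumption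
  have B: "B \<subseteq> {1..10}" "card B = 4" using Bm by simp_all
  have fB: "finite B" using B(1) by (rule finite_subset) simp
  have n5: "(5::nat) \<notin> S" using B1(1) by blast
  have BS: "B = insert 5 S" using B1(1,3) by blast
  have c: "card S = 3" using B1(1,3) B(2) fB by simp
  have sub: "S \<subseteq> {1..10} - {5}" using B1(1) B(1) by blast
  have h1: "insert 5 S \<notin> {{1,2,3,4}, {1,2,5,6}, {1,2,7,8}, {1,2,9,10}, {3,4,5,6}, {5,6,7,8}, {7,8,9,10}}" using B3 unfolding BS .
  have "S \<notin> {{1,2,6},{3,4,6},{6,7,8}}"
  proof
    assume "S \<in> {{1,2,6},{3,4,6},{6,7,8}}"
    then have "insert 5 S \<in> {{1,2,3,4}, {1,2,5,6}, {1,2,7,8}, {1,2,9,10}, {3,4,5,6}, {5,6,7,8}, {7,8,9,10}}" by (rule ins5[OF n5, THEN iffD2])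
    with h1 show False by contradiction
  qed
  then show "S \<in> {S. S \<subseteq> {1..10} - {5} \<and> card S = 3} - {{1,2,6},{3,4,6},{6,7,8}}"
    using c sub by (simp only: Diff_iff mem_Collect_eq simp_thms)
next
  fix S :: "nat set" assume "S \<in> {S. S \<subseteq> {1..10} - {5} \<and> card S = 3} - {{1,2,6},{3,4,6},{6,7,8}}"
  then have S: "S \<subseteq> {1..10} - {5}" "card S = 3" "S \<notin> {{1,2,6},{3,4,6},{6,7,8}}"
    by (simp_all only: Diff_iff mem_Collect_eq simp_thms)
  have fE: "finite ({1..10::nat} - {5})" by simp
  have fS: "finite S" using S(1) fE by (rule finite_subset)
  have n5: "(5::nat) \<notin> S" using S(1) by blast
  define B where "B = insert 5 S"
  have SB: "S = B - {5}" using n5 unfolding B_def by blast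
  have b1: "B \<subseteq> {1..10}" using S(1) unfolding B_def by auto
  have b2: "card B = 4" using S(2) fS n5 unfolding B_def by simp
  have b3: "(5::nat) \<in> B" unfolding B_def by simp
  have b4: "B \<notin> {{1,2,3,4}, {1,2,5,6}, {1,2,7,8}, {1,2,9,10}, {3,4,5,6}, {5,6,7,8}, {7,8,9,10}}"
    unfolding B_def
  proof
    assume "insert 5 S \<in> {{1,2,3,4}, {1,2,5,6}, {1,2,7,8}, {1,2,9,10}, {3,4,5,6}, {5,6,7,8}, {7,8,9,10}}"
    then have "S \<in> {{1,2,6},{3,4,6},{6,7,8}}" by (rule ins5[OF n5, THEN iffD1])
    with S(3) show False by contradiction
  qed
  have "B \<in> V10_bases" unfolding V10_bases_def using b1 b2 b4
    by (simp only: Diff_iff mem_Collect_eq simp_thms)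
  then have "\<exists>B. S = B - {5} \<and> B \<in> V10_bases \<and> 5 \<in> B" using SB b3 by blast
  then show "S \<in> contract_bases V10_bases 5"
    unfolding contract_bases_def by (simp only: mem_Collect_eq)
qed

lemma e3_expl: "esym x {1,2,3,4,6,7,8,9,10} 3 = x 1 * x 2 * x 3 + x 1 * x 2 * x 4 + x 1 * x 2 * x 6 + x 1 * x 2 * x 7 + x 1 * x 2 * x 8 + x 1 * x 2 * x 9 + x 1 * x 2 * x 10 + x 1 * x 3 * x 4 + x 1 * x 3 * x 6 + x 1 * x 3 * x 7 + x 1 * x 3 * x 8 + x 1 * x 3 * x 9 + x 1 * x 3 * x 10 + x 1 * x 4 * x 6 + x 1 * x 4 * x 7 + x 1 * x 4 * x 8 + x 1 * x 4 * x 9 + x 1 * x 4 * x 10 + x 1 * x 6 * x 7 + x 1 * x 6 * x 8 + x 1 * x 6 * x 9 + x 1 * x 6 * x 10 + x 1 * x 7 * x 8 + x 1 * x 7 * x 9 + x 1 * x 7 * x 10 + x 1 * x 8 * x 9 + x 1 * x 8 * x 10 + x 1 * x 9 * x 10 + x 2 * x 3 * x 4 + x 2 * x 3 * x 6 + x 2 * x 3 * x 7 + x 2 * x 3 * x 8 + x 2 * x 3 * x 9 + x 2 * x 3 * x 10 + x 2 * x 4 * x 6 + x 2 * x 4 * x 7 + x 2 * x 4 * x 8 + x 2 * x 4 * x 9 + x 2 * x 4 * x 10 + x 2 * x 6 * x 7 + x 2 * x 6 * x 8 + x 2 * x 6 * x 9 + x 2 * x 6 * x 10 + x 2 * x 7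 * x 8 + x 2 * x 7 * x 9 + x 2 * x 7 * x 10 + x 2 * x 8 * x 9 + x 2 * x 8 * x 10 + x 2 * x 9 * x 10 + x 3 * x 4 * x 6 + x 3 * x 4 * x 7 + x 3 * x 4 * x 8 + x 3 * x 4 * x 9 + x 3 * x 4 * x 10 + x 3 * x 6 * x 7 + x 3 * x 6 * x 8 + x 3 * x 6 * x 9 + x 3 * x 6 * x 10 + x 3 * x 7 * x 8 + x 3 * x 7 * x 9 + x 3 * x 7 * x 10 + x 3 * x 8 * x 9 + x 3 * x 8 * x 10 + x 3 * x 9 * x 10 + x 4 * x 6 * x 7 + x 4 * x 6 * x 8 + x 4 * x 6 * x 9 + x 4 * x 6 * x 10 + x 4 * x 7 * x 8 + x 4 * x 7 * x 9 + x 4 * x 7 * x 10 + x 4 * x 8 * x 9 + x 4 * x 8 * x 10 + x 4 * x 9 * x 10 + x 6 * x 7 * x 8 + x 6 * x 7 * x 9 + x 6 * x 7 * x 10 + x 6 * x 8 * x 9 + x 6 * x 8 * x 10 + x 6 * x 9 * x 10 + x 7 * x 8 * x 9 + x 7 * x 8 * x 10 + x 7 * x 9 * x 10 + x 8 * x 9 * x 10"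
proof -
  have a8: "esym x {10} 1 = x 10" by (simp add: esym_ins1 esym_ins1' esym_e1 esym_e1' esym_0)
  have a7: "esym x {9,10} 1 = x 9 + x 10" using a8 by (simp add: esym_ins1 esym_ins1' esym_0)
  have a6: "esym x {8,9,10} 1 = x 8 + x 9 + x 10" using a7 by (simp add: esym_ins1 esym_ins1' esym_0)
  have a5: "esym x {7,8,9,10} 1 = x 7 + x 8 + x 9 + x 10" using a6 by (simp add: esym_ins1 esym_ins1' esym_0)
  have a4: "esym x {6,7,8,9,10} 1 = x 6 + x 7 + x 8 + x 9 + x 10" using a5 by (simp add: esym_ins1 esym_ins1' esym_0)
  have a3: "esym x {4,6,7,8,9,10} 1 = x 4 + x 6 + x 7 + x 8 + x 9 + x 10" using a4 by (simp add: esym_ins1 esym_ins1' esym_0)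
  have a2: "esym x {3,4,6,7,8,9,10} 1 = x 3 + x 4 + x 6 + x 7 + x 8 + x 9 + x 10" using a3 by (simp add: esym_ins1 esym_ins1' esym_0)
  have a1: "esym x {2,3,4,6,7,8,9,10} 1 = x 2 + x 3 + x 4 + x 6 + x 7 + x 8 + x 9 + x 10" using a2 by (simp add: esym_ins1 esym_ins1' esym_0)
  have a0: "esym x {1,2,3,4,6,7,8,9,10} 1 = x 1 + x 2 + x 3 + x 4 + x 6 + x 7 + x 8 + x 9 + x 10" using a1 by (simp add: esym_ins1 esym_ins1' esym_0)
  have b8: "esym x {10} 2 = 0" by (simp add: esym_ins2 esym_e2 esym_e1 esym_e1' esym_0)
  have b7: "esym x {9,10} 2 = x 9 * x 10"
  proof -
    have "esym x {9,10} 2 = esym x {10} 2 + x 9 * esym x {10} 1" by (rule esym_ins2) auto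
    then show ?thesis unfolding a8 b8 by algebra
  qed
  have b6: "esym x {8,9,10} 2 = x 8 * x 9 + x 8 * x 10 + x 9 * x 10"
  proof -
    have "esym x {8,9,10} 2 = esym x {9,10} 2 + x 8 * esym x {9,10} 1" by (rule esym_ins2) auto
    then show ?thesis unfolding a7 b7 by algebra
  qed
  have b5: "esym x {7,8,9,10} 2 = x 7 * x 8 + x 7 * x 9 + x 7 * x 10 + x 8 * x 9 + x 8 * x 10 + x 9 * x 10"
  proof -
    have "esym x {7,8,9,10} 2 = esym x {8,9,10} 2 + x 7 * esym x {8,9,10} 1" by (rule esym_ins2) auto
    then show ?thesis unfolding a6 b6 by algebra
  qed
  have b4: "esym x {6,7,8,9,10} 2 = x 6 * x 7 + x 6 * x 8 + x 6 * x 9 + x 6 * x 10 + x 7 * x 8 + x 7 * x 9 + x 7 * x 10 + x 8 * x 9 + x 8 * x 10 + x 9 * x 10"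
  proof -
    have "esym x {6,7,8,9,10} 2 = esym x {7,8,9,10} 2 + x 6 * esym x {7,8,9,10} 1" by (rule esym_ins2) auto
    then show ?thesis unfolding a5 b5 by algebra
  qed
  have b3: "esym x {4,6,7,8,9,10} 2 = x 4 * x 6 + x 4 * x 7 + x 4 * x 8 + x 4 * x 9 + x 4 * x 10 + x 6 * x 7 + x 6 * x 8 + x 6 * x 9 + x 6 * x 10 + x 7 * x 8 + x 7 * x 9 + x 7 * x 10 + x 8 * x 9 + x 8 * x 10 + x 9 * x 10"
  proof -
    have "esym x {4,6,7,8,9,10} 2 = esym x {6,7,8,9,10} 2 + x 4 * esym x {6,7,8,9,10} 1" by (rule esym_ins2) auto
    then show ?thesis unfolding a4 b4 by algebra
  qed
  have b2: "esym x {3,4,6,7,8,9,10} 2 = x 3 * x 4 + x 3 * x 6 + x 3 * x 7 + x 3 * x 8 + x 3 * x 9 + x 3 * x 10 + x 4 * x 6 + x 4 * x 7 + x 4 * x 8 + x 4 * x 9 + x 4 * x 10 + x 6 * x 7 + x 6 * x 8 + x 6 * x 9 + x 6 * x 10 + x 7 * x 8 + x 7 * x 9 + x 7 * x 10 + x 8 * x 9 + x 8 * x 10 + x 9 * x 10"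
  proof -
    have "esym x {3,4,6,7,8,9,10} 2 = esym x {4,6,7,8,9,10} 2 + x 3 * esym x {4,6,7,8,9,10} 1" by (rule esym_ins2) auto
    then show ?thesis unfolding a3 b3 by algebra
  qed
  have b1: "esym x {2,3,4,6,7,8,9,10} 2 = x 2 * x 3 + x 2 * x 4 + x 2 * x 6 + x 2 * x 7 + x 2 * x 8 + x 2 * x 9 + x 2 * x 10 + x 3 * x 4 + x 3 * x 6 + x 3 * x 7 + x 3 * x 8 + x 3 * x 9 + x 3 * x 10 + x 4 * x 6 + x 4 * x 7 + x 4 * x 8 + x 4 * x 9 + x 4 * x 10 + x 6 * x 7 + x 6 * x 8 + x 6 * x 9 + x 6 * x 10 + x 7 * x 8 + x 7 * x 9 + x 7 * x 10 + x 8 * x 9 + x 8 * x 10 + x 9 * x 10"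
  proof -
    have "esym x {2,3,4,6,7,8,9,10} 2 = esym x {3,4,6,7,8,9,10} 2 + x 2 * esym x {3,4,6,7,8,9,10} 1" by (rule esym_ins2) auto
    then show ?thesis unfolding a2 b2 by algebra
  qed
  have b0: "esym x {1,2,3,4,6,7,8,9,10} 2 = x 1 * x 2 + x 1 * x 3 + x 1 * x 4 + x 1 * x 6 + x 1 * x 7 + x 1 * x 8 + x 1 * x 9 + x 1 * x 10 + x 2 * x 3 + x 2 * x 4 + x 2 * x 6 + x 2 * x 7 + x 2 * x 8 + x 2 * x 9 + x 2 * x 10 + x 3 * x 4 + x 3 * x 6 + x 3 * x 7 + x 3 * x 8 + x 3 * x 9 + x 3 * x 10 + x 4 * x 6 + x 4 * x 7 + x 4 * x 8 + x 4 * x 9 + x 4 * x 10 + x 6 * x 7 + x 6 * x 8 + x 6 * x 9 + x 6 * x 10 + x 7 * x 8 + x 7 * x 9 + x 7 * x 10 + x 8 * x 9 + x 8 * x 10 + x 9 * x 10"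
  proof -
    have "esym x {1,2,3,4,6,7,8,9,10} 2 = esym x {2,3,4,6,7,8,9,10} 2 + x 1 * esym x {2,3,4,6,7,8,9,10} 1" by (rule esym_ins2) auto
    then show ?thesis unfolding a1 b1 by algebra
  qed
  have c7: "esym x {9,10} 3 = 0" by (simp add: esym_ins3 esym_ins2 esym_e3 esym_e2 esym_e1 esym_e1' esym_0)
  have c6: "esym x {8,9,10} 3 = x 8 * x 9 * x 10"
  proof -
    have "esym x {8,9,10} 3 = esym x {9,10} 3 + x 8 * esym x {9,10} 2" by (rule esym_ins3) auto
    then show ?thesis unfolding b7 c7 by algebra
  qed
  have c5: "esym x {7,8,9,10} 3 = x 7 * x 8 * x 9 + x 7 * x 8 * x 10 + x 7 * x 9 * x 10 + x 8 * x 9 * x 10"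
  proof -
    have "esym x {7,8,9,10} 3 = esym x {8,9,10} 3 + x 7 * esym x {8,9,10} 2" by (rule esym_ins3) auto
    then show ?thesis unfolding b6 c6 by algebra
  qed
  have c4: "esym x {6,7,8,9,10} 3 = x 6 * x 7 * x 8 + x 6 * x 7 * x 9 + x 6 * x 7 * x 10 + x 6 * x 8 * x 9 + x 6 * x 8 * x 10 + x 6 * x 9 * x 10 + x 7 * x 8 * x 9 + x 7 * x 8 * x 10 + x 7 * x 9 * x 10 + x 8 * x 9 * x 10"
  proof -
    have "esym x {6,7,8,9,10} 3 = esym x {7,8,9,10} 3 + x 6 * esym x {7,8,9,10} 2" by (rule esym_ins3) auto
    then show ?thesis unfolding b5 c5 by algebra
  qed
  have c3: "esym x {4,6,7,8,9,10} 3 = x 4 * x 6 * x 7 + x 4 * x 6 * x 8 + x 4 * x 6 * x 9 + x 4 * x 6 * x 10 + x 4 * x 7 * x 8 + x 4 * x 7 * x 9 + x 4 * x 7 * x 10 + x 4 * x 8 * x 9 + x 4 * x 8 * x 10 + x 4 * x 9 * x 10 + x 6 * x 7 * x 8 + x 6 * x 7 * x 9 + x 6 * x 7 * x 10 + x 6 * x 8 * x 9 + x 6 * x 8 * x 10 + x 6 * x 9 * x 10 + x 7 * x 8 * x 9 + x 7 * x 8 * x 10 + x 7 * x 9 * x 10 + x 8 * x 9 * x 10"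
  proof -
    have "esym x {4,6,7,8,9,10} 3 = esym x {6,7,8,9,10} 3 + x 4 * esym x {6,7,8,9,10} 2" by (rule esym_ins3) auto
    then show ?thesis unfolding b4 c4 by algebra
  qed
  have c2: "esym x {3,4,6,7,8,9,10} 3 = x 3 * x 4 * x 6 + x 3 * x 4 * x 7 + x 3 * x 4 * x 8 + x 3 * x 4 * x 9 + x 3 * x 4 * x 10 + x 3 * x 6 * x 7 + x 3 * x 6 * x 8 + x 3 * x 6 * x 9 + x 3 * x 6 * x 10 + x 3 * x 7 * x 8 + x 3 * x 7 * x 9 + x 3 * x 7 * x 10 + x 3 * x 8 * x 9 + x 3 * x 8 * x 10 + x 3 * x 9 * x 10 + x 4 * x 6 * x 7 + x 4 * x 6 * x 8 + x 4 * x 6 * x 9 + x 4 * x 6 * x 10 + x 4 * x 7 * x 8 + x 4 * x 7 * x 9 + x 4 * x 7 * x 10 + x 4 * x 8 * x 9 + x 4 * x 8 * x 10 + x 4 * x 9 * x 10 + x 6 * x 7 * x 8 + x 6 * x 7 * x 9 + x 6 * x 7 * x 10 + x 6 * x 8 * x 9 + x 6 * x 8 * x 10 + x 6 * x 9 * x 10 + x 7 * x 8 * x 9 + x 7 * x 8 * x 10 + x 7 * x 9 * x 10 + x 8 * x 9 * x 10"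
  proof -
    have "esym x {3,4,6,7,8,9,10} 3 = esym x {4,6,7,8,9,10} 3 + x 3 * esym x {4,6,7,8,9,10} 2" by (rule esym_ins3) auto
    then show ?thesis unfolding b3 c3 by algebra
  qed
  have c1: "esym x {2,3,4,6,7,8,9,10} 3 = x 2 * x 3 * x 4 + x 2 * x 3 * x 6 + x 2 * x 3 * x 7 + x 2 * x 3 * x 8 + x 2 * x 3 * x 9 + x 2 * x 3 * x 10 + x 2 * x 4 * x 6 + x 2 * x 4 * x 7 + x 2 * x 4 * x 8 + x 2 * x 4 * x 9 + x 2 * x 4 * x 10 + x 2 * x 6 * x 7 + x 2 * x 6 * x 8 + x 2 * x 6 * x 9 + x 2 * x 6 * x 10 + x 2 * x 7 * x 8 + x 2 * x 7 * x 9 + x 2 * x 7 * x 10 + x 2 * x 8 * x 9 + x 2 * x 8 * x 10 + x 2 * x 9 * x 10 + x 3 * x 4 * x 6 + x 3 * x 4 * x 7 + x 3 * x 4 * x 8 + x 3 * x 4 * x 9 + x 3 * x 4 * x 10 + x 3 * x 6 * x 7 + x 3 * x 6 * x 8 + x 3 * x 6 * x 9 + x 3 * x 6 * x 10 + x 3 * x 7 * x 8 + x 3 * x 7 * x 9 + x 3 * x 7 * x 10 + x 3 * x 8 * x 9 + x 3 * x 8 * x 10 + x 3 * x 9 * x 10 + x 4 * x 6 * x 7 + x 4 * x 6 * x 8 + x 4 * x 6 * x 9 + x 4 * x 6 * x 10 + x 4 * x 7 * x 8 + x 4 * x 7 * x 9 + x 4 * x 7 * x 10 + x 4 * x 8 *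 x 9 + x 4 * x 8 * x 10 + x 4 * x 9 * x 10 + x 6 * x 7 * x 8 + x 6 * x 7 * x 9 + x 6 * x 7 * x 10 + x 6 * x 8 * x 9 + x 6 * x 8 * x 10 + x 6 * x 9 * x 10 + x 7 * x 8 * x 9 + x 7 * x 8 * x 10 + x 7 * x 9 * x 10 + x 8 * x 9 * x 10"
  proof -
    have "esym x {2,3,4,6,7,8,9,10} 3 = esym x {3,4,6,7,8,9,10} 3 + x 2 * esym x {3,4,6,7,8,9,10} 2" by (rule esym_ins3) auto
    then show ?thesis unfolding b2 c2 by algebra
  qed
  have c0: "esym x {1,2,3,4,6,7,8,9,10} 3 = x 1 * x 2 * x 3 + x 1 * x 2 * x 4 + x 1 * x 2 * x 6 + x 1 * x 2 * x 7 + x 1 * x 2 * x 8 + x 1 * x 2 * x 9 + x 1 * x 2 * x 10 + x 1 * x 3 * x 4 + x 1 * x 3 * x 6 + x 1 * x 3 * x 7 + x 1 * x 3 * x 8 + x 1 * x 3 * x 9 + x 1 * x 3 * x 10 + x 1 * x 4 * x 6 + x 1 * x 4 * x 7 + x 1 * x 4 * x 8 + x 1 * x 4 * x 9 + x 1 * x 4 * x 10 + x 1 * x 6 * x 7 + x 1 * x 6 * x 8 + x 1 * x 6 * x 9 + x 1 * x 6 * x 10 + x 1 * x 7 * x 8 + x 1 * x 7 * x 9 + x 1 * x 7 * x 10 + x 1 * x 8 * x 9 + x 1 * x 8 * x 10 + x 1 * x 9 * x 10 + x 2 * x 3 * x 4 + x 2 * x 3 * x 6 + x 2 * x 3 * x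 7 + x 2 * x 3 * x 8 + x 2 * x 3 * x 9 + x 2 * x 3 * x 10 + x 2 * x 4 * x 6 + x 2 * x 4 * x 7 + x 2 * x 4 * x 8 + x 2 * x 4 * x 9 + x 2 * x 4 * x 10 + x 2 * x 6 * x 7 + x 2 * x 6 * x 8 + x 2 * x 6 * x 9 + x 2 * x 6 * x 10 + x 2 * x 7 * x 8 + x 2 * x 7 * x 9 + x 2 * x 7 * x 10 + x 2 * x 8 * x 9 + x 2 * x 8 * x 10 + x 2 * x 9 * x 10 + x 3 * x 4 * x 6 + x 3 * x 4 * x 7 + x 3 * x 4 * x 8 + x 3 * x 4 * x 9 + x 3 * x 4 * x 10 + x 3 * x 6 * x 7 + x 3 * x 6 * x 8 + x 3 * x 6 * x 9 + x 3 * x 6 * x 10 + x 3 * x 7 * x 8 + x 3 * x 7 * x 9 + x 3 * x 7 * x 10 + x 3 * x 8 * x 9 + x 3 * x 8 * x 10 + x 3 * x 9 * x 10 + x 4 * x 6 * x 7 + x 4 * x 6 * x 8 + x 4 * x 6 * x 9 + x 4 * x 6 * x 10 + x 4 * x 7 * x 8 + x 4 * x 7 * x 9 + x 4 * x 7 * x 10 + x 4 * x 8 * x 9 + x 4 * x 8 * x 10 + x 4 * x 9 * x 10 + x 6 * x 7 * x 8 + x 6 * x 7 * x 9 + x 6 * x 7 * x 10 + x 6 * x 8 * x 9 + x 6 * x 8 * x 10 + x 6 * x 9 * x 10 + x 7 * x 8 * x 9 + x 7 * x 8 * x 10 + x 7 * x 9 * x 10 + x 8 * x 9 * x 10"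
  proof -
    have "esym x {1,2,3,4,6,7,8,9,10} 3 = esym x {2,3,4,6,7,8,9,10} 3 + x 1 * esym x {2,3,4,6,7,8,9,10} 2" by (rule esym_ins3) auto
    then show ?thesis unfolding b1 c1 by algebra
  qed
  show ?thesis using c0 .
qed


lemma Im_inv_neg: fixes w :: complex assumes "Im w > 0" shows "Im (1 / w) < 0"
proof -
  have "Re w ^ 2 + Im w ^ 2 > 0" using assms by (simp add: add_nonneg_pos)
  then show ?thesis using assms by (simp add: Im_divide divide_neg_pos)
qed

lemma split_root:
  fixes p :: "complex poly"
  assumes "degree p = Suc n"
  shows "\<exists>r q. p = [:-r,1:] * q \<and> degree q = n \<and> poly p r = 0"
proof -
  have "\<not> constant (poly p)" using assms by (simp add: constant_degree)
  then obtain r where r: "poly p r = 0" using fundamental_theorem_of_algebra by blast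
  then obtain q where q: "p = [:-r,1:] * q" using poly_eq_0_iff_dvd by (metis dvdE)
  have "q \<noteq> 0" using q assms by auto
  have "degree [:-r,1::complex:] = 1" by simp
  then have "degree p = 1 + degree q" using q \<open>q \<noteq> 0\<close> by (metis degree_mult_eq pCons_eq_0_iff one_neq_zero)
  then show ?thesis using q r assms by auto
qed

lemma GL_step:
  fixes p q :: "complex poly"
  assumes p: "p = [:-r,1:] * q" and z: "z \<noteq> r" and qz: "poly q z \<noteq> 0"
  shows "poly (pderiv p) z / poly p z = 1 / (z - r) + poly (pderiv q) z / poly q z"
proof -
  have d1: "pderiv [:-r,1:] = 1" by (simp add: pderiv_pCons)
  have "pderiv p = [:-r,1:] * pderiv q + q * pderiv [:-r,1:]" unfolding p by (rule pderiv_mult)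
  then have "pderiv p = [:-r,1:] * pderiv q + q" using d1 by simp
  then have "poly (pderiv p) z = poly ([:-r,1:] * pderiv q + q) z" by simp
  also have "\<dots> = (z - r) * poly (pderiv q) z + poly q z" by (simp add: algebra_simps)
  finally have e1: "poly (pderiv p) z = (z - r) * poly (pderiv q) z + poly q z" .
  have e2: "poly p z = (z - r) * poly q z" unfolding p by (simp only: poly_mult) (simp add: algebra_simps)
  have "z - r \<noteq> 0" using z by simp
  then show ?thesis unfolding e1 e2 using qz by (simp add: field_simps)
qed

lemma GL_aux:
  fixes p :: "complex poly"
  shows "degree p = Suc n \<Longrightarrow> (\<forall>r. poly p r = 0 \<longrightarrow> Im r < 0) \<Longrightarrow> Im z \<ge> 0
    \<Longrightarrow> Im (poly (pderiv p) z / poly p z) < 0"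
proof (induction n arbitrary: p)
  case (0 p)
  obtain r q where rq: "p = [:-r,1:] * q" "degree q = 0" "poly p r = 0"
    using split_root[OF 0(1)] by blast
  have "Im r < 0" using 0(2) rq(3) by blast
  then have zr: "Im (z - r) > 0" using 0(3) by simp
  then have "z \<noteq> r" by auto
  have "q \<noteq> 0" using rq 0(1) by auto
  then have "poly q z \<noteq> 0" using rq(2) by (metis degree_0_id poly_const_conv pCons_0_0)
  then have "poly (pderiv p) z / poly p z = 1 / (z - r)"
    using GL_step[OF rq(1) \<open>z \<noteq> r\<close>] rq(2) by (simp add: pderiv_eq_0_iff[THEN iffD2])
  then show ?case using Im_inv_neg[OF zr] by simp
next
  case (Suc n p)
  obtain r q where rq: "p = [:-r,1:] * q" "degree q = Suc n" "poly p r = 0"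
    using split_root[OF Suc(2)] by blast
  have "Im r < 0" using Suc(3) rq(3) by blast
  then have zr: "Im (z - r) > 0" using Suc(4) by simp
  then have "z \<noteq> r" by auto
  have qroots: "\<forall>x. poly q x = 0 \<longrightarrow> Im x < 0" using Suc(3) rq(1) by auto
  then have "poly q z \<noteq> 0" using Suc(4) by force
  have "Im (poly (pderiv q) z / poly q z) < 0" using Suc.IH[OF rq(2) qroots Suc(4)] .
  then show ?case using GL_step[OF rq(1) \<open>z \<noteq> r\<close> \<open>poly q z \<noteq> 0\<close>] Im_inv_neg[OF zr] by simp
qed

lemma GL:
  fixes p :: "complex poly"
  assumes "degree p \<ge> 1" and "\<And>z. Im z \<ge> 0 \<Longrightarrow> poly p z \<noteq> 0" and "Im z \<ge> 0"
  shows "poly (pderiv p) z \<noteq> 0"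
proof -
  obtain n where n: "degree p = Suc n" using assms(1) by (cases "degree p") auto
  have roots: "\<forall>r. poly p r = 0 \<longrightarrow> Im r < 0" using assms(2) by force
  have "Im (poly (pderiv p) z / poly p z) < 0" using GL_aux[OF n roots assms(3)] .
  then show ?thesis by auto
qed

lemma pick_pair:
  fixes a b t :: complex
  assumes "Im a \<ge> 0" "Im b \<ge> 0" "Im t \<ge> 0"
  shows "Im (((a+b)*t + 4*a*b) * cnj (t + a + b)) \<ge> 0"
proof -
  have "Im (((a+b)*t + 4*a*b) * cnj (t + a + b)) =
     Im a * (cmod (2*b+t))^2 + Im b * (cmod (2*a+t))^2 + Im t * (cmod (a-b))^2"
    apply (simp only: cmod_power2)
    apply (simp add: power2_eq_square)
    apply algebra
    done
  then show ?thesis using assms by simp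
qed

lemma Im_div_nonneg:
  fixes N D :: complex
  assumes "Im (N * cnj D) \<ge> 0"
  shows "Im (N / D) \<ge> 0"
proof -
  have "Im (N / D) = Im (N * cnj D) / ((Re D)^2 + (Im D)^2)" by (simp add: Im_divide)
  then show ?thesis using assms by simp
qed

definition Fp :: "complex \<Rightarrow> complex \<Rightarrow> complex \<Rightarrow> complex \<Rightarrow> complex \<Rightarrow> complex \<Rightarrow> complex \<Rightarrow> complex \<Rightarrow> complex \<Rightarrow> complex \<Rightarrow> complex \<Rightarrow> complex poly" where
"Fp al g1 g2 g3 g4 g5 b1 b2 b3 b4 b5 = [:al,1:]*[:g1,1:]*[:g2,1:]*[:g3,1:]*[:g4,1:]*[:g5,1:]
  - smult (b1^2) ([:g2,1:]*[:g3,1:]*[:g4,1:]*[:g5,1:])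
  - smult (b2^2) ([:g1,1:]*[:g3,1:]*[:g4,1:]*[:g5,1:])
  - smult (b3^2) ([:g1,1:]*[:g2,1:]*[:g4,1:]*[:g5,1:])
  - smult (b4^2) ([:g1,1:]*[:g2,1:]*[:g3,1:]*[:g5,1:])
  - smult (b5^2) ([:g1,1:]*[:g2,1:]*[:g3,1:]*[:g4,1:])"

lemma arrow_nonzero:
  fixes s a b c d e f u w t :: complex
  assumes pos: "Im s > 0" "Im a > 0" "Im b > 0" "Im c > 0" "Im d > 0" "Im e > 0" "Im f > 0"
    "Im u > 0" "Im w > 0" and tt: "Im t \<ge> 0"
  shows "poly (Fp (4*s + (a+b)+(c+d)+(e+f)+u+w) (a+b) (c+d) (e+f) u w (a-b) (c-d) (e-f) u w) t \<noteq> 0"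
proof -
  define D1 where "D1 = t + (a+b)"
  define D2 where "D2 = t + (c+d)"
  define D3 where "D3 = t + (e+f)"
  define D4 where "D4 = t + u"
  define D5 where "D5 = t + w"
  define N1 where "N1 = (a+b)*t + 4*a*b"
  define N2 where "N2 = (c+d)*t + 4*c*d"
  define N3 where "N3 = (e+f)*t + 4*e*f"
  define N4 where "N4 = (u+0)*t + 4*u*0"
  define N5 where "N5 = (w+0)*t + 4*w*0"
  define K where "K = t + 4*s + N1/D1 + N2/D2 + N3/D3 + N4/D4 + N5/D5"
  have nz: "D1 \<noteq> 0" "D2 \<noteq> 0" "D3 \<noteq> 0" "D4 \<noteq> 0" "D5 \<noteq> 0"
    using pos tt unfolding D1_def D2_def D3_def D4_def D5_def by (auto simp: complex_eq_iff)
  have i1: "Im (N1/D1) \<ge> 0" unfolding N1_def D1_def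
    by (rule Im_div_nonneg) (use pick_pair[of a b t] pos tt in \<open>simp add: add.assoc\<close>)
  have i2: "Im (N2/D2) \<ge> 0" unfolding N2_def D2_def
    by (rule Im_div_nonneg) (use pick_pair[of c d t] pos tt in \<open>simp add: add.assoc\<close>)
  have i3: "Im (N3/D3) \<ge> 0" unfolding N3_def D3_def
    by (rule Im_div_nonneg) (use pick_pair[of e f t] pos tt in \<open>simp add: add.assoc\<close>)
  have i4: "Im (N4/D4) \<ge> 0" unfolding N4_def D4_def
    by (rule Im_div_nonneg) (use pick_pair[of u 0 t] pos tt in \<open>simp add: add.assoc\<close>)
  have i5: "Im (N5/D5) \<ge> 0" unfolding N5_def D5_def
    by (rule Im_div_nonneg) (use pick_pair[of w 0 t] pos tt in \<open>simp add: add.assoc\<close>)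
  have "Im K > 0" using i1 i2 i3 i4 i5 pos tt unfolding K_def by simp
  then have Knz: "K \<noteq> 0" by auto
  have eqK: "D1*D2*D3*D4*D5*K = (t+4*s)*D1*D2*D3*D4*D5 + N1*D2*D3*D4*D5 + N2*D1*D3*D4*D5
       + N3*D1*D2*D4*D5 + N4*D1*D2*D3*D5 + N5*D1*D2*D3*D4"
  proof -
    have h1: "D1*D2*D3*D4*D5*(N1/D1) = N1*D2*D3*D4*D5" using nz by simp
    have h2: "D1*D2*D3*D4*D5*(N2/D2) = N2*D1*D3*D4*D5" using nz by simp
    have h3: "D1*D2*D3*D4*D5*(N3/D3) = N3*D1*D2*D4*D5" using nz by simp
    have h4: "D1*D2*D3*D4*D5*(N4/D4) = N4*D1*D2*D3*D5" using nz by simp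
    have h5: "D1*D2*D3*D4*D5*(N5/D5) = N5*D1*D2*D3*D4" using nz by simp
    have "D1*D2*D3*D4*D5*K = D1*D2*D3*D4*D5*(t+4*s) + D1*D2*D3*D4*D5*(N1/D1)
       + D1*D2*D3*D4*D5*(N2/D2) + D1*D2*D3*D4*D5*(N3/D3) + D1*D2*D3*D4*D5*(N4/D4)
       + D1*D2*D3*D4*D5*(N5/D5)"
      unfolding K_def by (simp only: distrib_left add.assoc)
    also have "\<dots> = (t+4*s)*D1*D2*D3*D4*D5 + N1*D2*D3*D4*D5 + N2*D1*D3*D4*D5
       + N3*D1*D2*D4*D5 + N4*D1*D2*D3*D5 + N5*D1*D2*D3*D4"
      unfolding h1 h2 h3 h4 h5 by (simp only: mult_ac)
    finally show ?thesis .
  qed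
  have eqF: "poly (Fp (4*s + (a+b)+(c+d)+(e+f)+u+w) (a+b) (c+d) (e+f) u w (a-b) (c-d) (e-f) u w) t
     = (t+4*s)*D1*D2*D3*D4*D5 + N1*D2*D3*D4*D5 + N2*D1*D3*D4*D5
       + N3*D1*D2*D4*D5 + N4*D1*D2*D3*D5 + N5*D1*D2*D3*D4"
    unfolding Fp_def D1_def D2_def D3_def D4_def D5_def N1_def N2_def N3_def N4_def N5_def
    apply (simp only: poly_diff poly_mult poly_smult poly_pCons poly_0)
    apply algebra
    done
  show ?thesis unfolding eqF eqK[symmetric] using nz Knz by simp
qed




lemma Fp_coeff3: "coeff (Fp al g1 g2 g3 g4 g5 b1 b2 b3 b4 b5) 3 = al*g1*g2 + al*g1*g3 + al*g1*g4 + al*g1*g5 + al*g2*g3 + al*g2*g4 + al*g2*g5 + al*g3*g4 + al*g3*g5 + al*g4*g5 + g1*g2*g3 + g1*g2*g4 + g1*g2*g5 + g1*g3*g4 + g1*g3*g5 + g1*g4*g5 + g2*g3*g4 + g2*g3*g5 + g2*g4*g5 + g3*g4*g5 - b1^2*(g2+g3+g4+g5) - b2^2*(g1+g3+g4+g5) - b3^2*(g1+g2+g4+g5) - b4^2*(g1+g2+g3+g5) - b5^2*(g1+g2+g3+g4)"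
  unfolding Fp_def by (simp add: coeff_mult numeral_eq_Suc algebra_simps)

lemma Fp_coeff6: "coeff (Fp al g1 g2 g3 g4 g5 b1 b2 b3 b4 b5) 6 = 1"
  unfolding Fp_def by (simp add: coeff_mult numeral_eq_Suc)

lemma bg_expl:
  "basis_gen_poly (contract_bases V10_bases 5) z
     = esym z ({1..10} - {5}) 3 - (z 1 * z 2 * z 6 + z 3 * z 4 * z 6 + z 6 * z 7 * z 8)"
proof -
  have fin: "finite {S. S \<subseteq> {1..10::nat} - {5} \<and> card S = 3}"
    by (rule finite_subset[of _ "Pow ({1..10} - {5})"]) auto
  have sub: "{{1,2,6},{3,4,6},{6,7,8}} \<subseteq> {S. S \<subseteq> {1..10::nat} - {5} \<and> card S = 3}"
    by auto
  have n1: "{1,2,6::nat} \<noteq> {3,4,6}"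
  proof
    assume "{1,2,6::nat} = {3,4,6}"
    then have "(3::nat) \<in> {1,2,6}" by simp
    then show False by simp
  qed
  have n2: "{1,2,6::nat} \<noteq> {6,7,8}"
  proof
    assume "{1,2,6::nat} = {6,7,8}"
    then have "(7::nat) \<in> {1,2,6}" by simp
    then show False by simp
  qed
  have n3: "{3,4,6::nat} \<noteq> {6,7,8}"
  proof
    assume "{3,4,6::nat} = {6,7,8}"
    then have "(7::nat) \<in> {3,4,6}" by simp
    then show False by simp
  qed
  have d1: "{1,2,6::nat} \<notin> {{3,4,6},{6,7,8}}" using n1 n2 by simp
  have d2: "{3,4,6::nat} \<notin> {{6,7,8}}" using n3 by simp
  have s3: "(\<Sum>S\<in>{{1,2,6},{3,4,6},{6,7,8::nat}}. \<Prod>i\<in>S. z i) = z 1 * z 2 * z 6 + z 3 * z 4 * z 6 + z 6 * z 7 * z 8"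
    using d1 d2 by (simp add: algebra_simps)
  show ?thesis unfolding basis_gen_poly_def contract_eq esym_def
    using sum_diff[OF fin sub, of "\<lambda>S. \<Prod>i\<in>S. z i"] s3 by simp
qed

lemma g_nonzero:
  assumes pos: "\<forall>i\<in>{1..10} - {5}. Im (z i) > 0"
  shows "basis_gen_poly (contract_bases V10_bases 5) z \<noteq> 0"
proof -
  have p: "Im (z 1) > 0" "Im (z 2) > 0" "Im (z 3) > 0" "Im (z 4) > 0" "Im (z 6) > 0"
    "Im (z 7) > 0" "Im (z 8) > 0" "Im (z 9) > 0" "Im (z 10) > 0" using pos by auto
  define F where "F = Fp (4*z 6 + (z 1+z 2)+(z 3+z 4)+(z 7+z 8)+z 9+z 10) (z 1+z 2) (z 3+z 4) (z 7+z 8) (z 9) (z 10)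
     (z 1-z 2) (z 3-z 4) (z 7-z 8) (z 9) (z 10)"
  have F0: "poly F t \<noteq> 0" if "Im t \<ge> 0" for t
    unfolding F_def by (rule arrow_nonzero) (use p that in auto)
  have "coeff F 6 = 1" unfolding F_def by (rule Fp_coeff6)
  then have dF: "degree F \<ge> 6" by (metis le_degree one_neq_zero)
  have F1: "poly (pderiv F) t \<noteq> 0" if "Im t \<ge> 0" for t
    by (rule GL) (use dF F0 that in auto)
  have F2: "poly (pderiv (pderiv F)) t \<noteq> 0" if "Im t \<ge> 0" for t
    by (rule GL) (use dF F1 that in \<open>auto simp: degree_pderiv\<close>)
  have F3: "poly (pderiv (pderiv (pderiv F))) 0 \<noteq> 0"
    by (rule GL) (use dF F2 in \<open>auto simp: degree_pderiv\<close>)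
  have "poly (pderiv (pderiv (pderiv F))) 0 = 6 * coeff F 3"
    by (simp add: poly_0_coeff_0 coeff_pderiv numeral_eq_Suc)
  then have c3: "coeff F 3 \<noteq> 0" using F3 by auto
  have "coeff F 3 = 4 * basis_gen_poly (contract_bases V10_bases 5) z"
    unfolding F_def Fp_coeff3 bg_expl E_eq e3_expl by algebra
  then show ?thesis using c3 by auto
qed

theorem lemma4p3:
  shows "half_plane_property ({1..10} - {5}) (contract_bases V10_bases 5)"
  unfolding half_plane_property_def stable_on_def
proof (intro allI impI)
  fix v w :: "nat \<Rightarrow> real" and t :: complex
  assume vpos: "\<forall>i\<in>{1..10} - {5}. 0 < v i"
    and root: "basis_gen_poly (contract_bases V10_bases 5) (\<lambda>i. t * complex_of_real (v i) + complex_of_real (w i)) = 0"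
  show "t \<in> \<real>"
  proof (rule ccontr)
    assume "t \<notin> \<real>"
    then have "Im t \<noteq> 0" using complex_is_Real_iff by blast
    then consider "Im t > 0" | "Im t < 0" by linarith
    then show False
    proof cases
      case 1
      have "\<forall>i\<in>{1..10} - {5}. Im (t * complex_of_real (v i) + complex_of_real (w i)) > 0"
        using vpos 1 by simp
      then show False using g_nonzero[of "\<lambda>i. t * complex_of_real (v i) + complex_of_real (w i)"] root by simp
    next
      case 2
      have "\<forall>i\<in>{1..10} - {5}. Im (cnj t * complex_of_real (v i) + complex_of_real (w i)) > 0"
        using vpos 2 by (simp add: mult_neg_pos)
      moreover have "basis_gen_poly (contract_bases V10_bases 5) (\<lambda>i. cnj t * complex_of_real (v i) + complex_of_real (w i))
          = cnj (basis_gen_poly (contract_bases V10_bases 5) (\<lambda>i. t * complex_of_real (v i) + complex_of_real (w i)))"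
        unfolding basis_gen_poly_def by simp
      ultimately show False using g_nonzero[of "\<lambda>i. cnj t * complex_of_real (v i) + complex_of_real (w i)"] root by simp
    qed
  qed
qed


end
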